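(* In the setting of 1D Toom-Cook convolution described in the context, suppose every dot product in the three linear transforms (by $G$, $B^T$ and $A^T$) is computed by linear (recursive, left-to-right) summation of the rounded products, with arbitrary (not necessarily exactly representable) matrix entries. Then $$|\hat s-s|\le |A^T|\big(|G|\,|h|\odot|B^T|\,|x|\big)(n_h+2n+4)\varepsilon+O(\varepsilon^2)$$ and $$\|\hat s-s\|_1\le \|A^T\|_1\,\|G\|_F\,\|h\|_2\,\|B^T\|_F\,\|x\|_2\,(n_h+2n+4)\varepsilon+O(\varepsilon^2).$$
   Context: Let $n_h,n_o\ge1$, $n=n_o+n_h-1$, $p_1,\dots,p_n$ distinct reals, $N_i=1/\prod_{j\ne i}(p_i-p_j)$, $M_{i,j}$ the coefficient of $a^{j-1}$ in $\prod_{k\ne i}(a-p_k)$; $A^T\in\mathbb{R}^{n_o\times n}$ with $A^T_{i,j}=p_j^{i-1}$, $G\in\mathbb{R}^{n\times n_h}$ with $G_{i,j}=p_i^{j-1}N_i$, $B^T\in\mathbb{R}^{n\times n}$ with $B^T_{i,j}=M_{j,i}$. For $h\in F^{n_h}$, $x\in F^n$, $s=A^T(Gh\odot B^Tx)$ is the exact value and $\hat s$ is computed as: $u=fl(fl(G)h)$, $v=fl(fl(B^T)x)$ (row dot products), $w_i=fl(u_iv_i)$, $\hat s=fl(fl(A^T)w)$. Floating point model: unit roundoff $\varepsilon$, no overflow, $fl(y\,\mathrm{op}\,z)=(y\,\mathrm{op}\,z)(1+\delta)$, $fl(y)=y(1+\delta)$, $|\delta|\le\varepsilon$; matrix entries are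 stored rounded. $\odot$ is the Hadamard product, $|\cdot|$ entrywise absolute value, $\|\cdot\|_1$ the vector 1-norm / induced matrix 1-norm, $\|\cdot\|_F$ Frobenius norm, $\|\cdot\|_2$ Euclidean norm. *)

theory Defs
  imports Complex_Main "HOL-Computational_Algebra.Polynomial"
begin

text \<open>All indices are 0-based: vector/matrix index i corresponds to index i+1 of the paper.
  Matrices are functions nat => nat => real, vectors nat => real, with explicit dimensions.\<close>

definition tcN :: "nat \<Rightarrow> (nat \<Rightarrow> real) \<Rightarrow> nat \<Rightarrow> real" where
  "tcN n p i = 1 / (\<Prod>j\<in>{..<n} - {i}. (p i - p j))"

definition tcM :: "nat \<Rightarrow> (nat \<Rightarrow> real) \<Rightarrow> nat \<Rightarrow> nat \<Rightarrow> real" where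
  "tcM n p i j = coeff (\<Prod>k\<in>{..<n} - {i}. [:- p k, 1:]) j"

definition tcAT :: "(nat \<Rightarrow> real) \<Rightarrow> nat \<Rightarrow> nat \<Rightarrow> real" where
  "tcAT p i j = p j ^ i"

definition tcG :: "nat \<Rightarrow> (nat \<Rightarrow> real) \<Rightarrow> nat \<Rightarrow> nat \<Rightarrow> real" where
  "tcG n p i j = p i ^ j * tcN n p i"

definition tcBT :: "nat \<Rightarrow> (nat \<Rightarrow> real) \<Rightarrow> nat \<Rightarrow> nat \<Rightarrow> real" where
  "tcBT n p i j = tcM n p j i"

text \<open>Rounded linear (recursive, left-to-right) summation of terms t 0, ..., t (m-1):
  the k-th addition (k >= 1) is perturbed by the factor (1 + d k); the first term is taken as is.\<close>
fun lsum :: "(nat \<Rightarrow> real) \<Rightarrow> (nat \<Rightarrow> real) \<Rightarrow> nat \<Rightarrow> real" where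
  "lsum t d 0 = 0"
| "lsum t d (Suc k) = (if k = 0 then t 0 else (lsum t d k + t k) * (1 + d k))"

text \<open>r is a possible floating point value of the dot product of the row a (length m, entries
  stored rounded) with the vector y, computed by linear summation of rounded products.\<close>
definition fl_dot :: "real \<Rightarrow> nat \<Rightarrow> (nat \<Rightarrow> real) \<Rightarrow> (nat \<Rightarrow> real) \<Rightarrow> real \<Rightarrow> bool" where
  "fl_dot eps m a y r \<longleftrightarrow>
     (\<exists>da dm ds :: nat \<Rightarrow> real.
        (\<forall>j. \<bar>da j\<bar> \<le> eps) \<and> (\<forall>j. \<bar>dm j\<bar> \<le> eps) \<and> (\<forall>j. \<bar>ds j\<bar> \<le> eps) \<and>
        r = lsum (\<lambda>j. (a j * (1 + da j)) * y j * (1 + dm j)) ds m)"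

text \<open>shat is a possible computed result of the Toom-Cook algorithm
  u = fl(fl(G)h), v = fl(fl(B^T)x), w_i = fl(u_i v_i), shat = fl(fl(A^T)w).\<close>
definition tc_computed ::
  "real \<Rightarrow> nat \<Rightarrow> nat \<Rightarrow> (nat \<Rightarrow> real) \<Rightarrow> (nat \<Rightarrow> real) \<Rightarrow> (nat \<Rightarrow> real) \<Rightarrow> (nat \<Rightarrow> real) \<Rightarrow> bool" where
  "tc_computed eps n_o n_h p h x shat \<longleftrightarrow>
     (let n = n_o + n_h - 1 in
      \<exists>u v w :: nat \<Rightarrow> real.
        (\<forall>i<n. fl_dot eps n_h (tcG n p i) h (u i)) \<and>
        (\<forall>i<n. fl_dot eps n (tcBT n p i) x (v i)) \<and>
        (\<forall>i<n. \<exists>\<delta>. \<bar>\<delta>\<bar> \<le> eps \<and> w i = u i * v i * (1 + \<delta>)) \<and>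
        (\<forall>i<n_o. fl_dot eps n (tcAT p i) w (shat i)))"

definition tc_exact :: "nat \<Rightarrow> nat \<Rightarrow> (nat \<Rightarrow> real) \<Rightarrow> (nat \<Rightarrow> real) \<Rightarrow> (nat \<Rightarrow> real) \<Rightarrow> nat \<Rightarrow> real" where
  "tc_exact n_o n_h p h x i =
     (let n = n_o + n_h - 1 in
      \<Sum>j<n. tcAT p i j * ((\<Sum>k<n_h. tcG n p j k * h k) * (\<Sum>k<n. tcBT n p j k * x k)))"

definition mat_norm1 :: "nat \<Rightarrow> nat \<Rightarrow> (nat \<Rightarrow> nat \<Rightarrow> real) \<Rightarrow> real" where
  "mat_norm1 r c A = Max ((\<lambda>j. \<Sum>i<r. \<bar>A i j\<bar>) ` {..<c})"

definition frob :: "nat \<Rightarrow> nat \<Rightarrow> (nat \<Rightarrow> nat \<Rightarrow> real) \<Rightarrow> real" where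
  "frob r c A = sqrt (\<Sum>i<r. \<Sum>j<c. (A i j)^2)"

definition vnorm2 :: "nat \<Rightarrow> (nat \<Rightarrow> real) \<Rightarrow> real" where
  "vnorm2 m y = sqrt (\<Sum>k<m. (y k)^2)"

end

theory Submission
  imports Defs "HOL-Analysis.L2_Norm"
begin


definition gam :: "nat \<Rightarrow> real \<Rightarrow> real" where "gam K e = (1+e)^K - 1"

lemma gam_nonneg: "0 \<le> e \<Longrightarrow> 0 \<le> gam K e"
  unfolding gam_def by (simp add: one_le_power)

lemma gam_mono: assumes "0 \<le> e" "p \<le> q" shows "gam p e \<le> gam q e"
  unfolding gam_def using assms by (simp add: power_increasing)

lemma gam_mult:
  assumes "0 \<le> e" "\<bar>a - 1\<bar> \<le> gam p e" "\<bar>b - 1\<bar> \<le> gam q e"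
  shows "\<bar>a * b - 1\<bar> \<le> gam (p+q) e"
proof -
  have "a * b - 1 = (a-1)*(b-1) + (a-1) + (b-1)" by (simp add: algebra_simps)
  moreover have "\<bar>(a-1)*(b-1)\<bar> = \<bar>a-1\<bar>*\<bar>b-1\<bar>" by (rule abs_mult)
  moreover have "\<bar>(a-1)*(b-1) + (a-1) + (b-1)\<bar> \<le> \<bar>(a-1)*(b-1) + (a-1)\<bar> + \<bar>b-1\<bar>" by (rule abs_triangle_ineq)
  moreover have "\<bar>(a-1)*(b-1) + (a-1)\<bar> \<le> \<bar>(a-1)*(b-1)\<bar> + \<bar>a-1\<bar>" by (rule abs_triangle_ineq)
  ultimately have "\<bar>a*b-1\<bar> \<le> \<bar>a-1\<bar>*\<bar>b-1\<bar> + \<bar>a-1\<bar> + \<bar>b-1\<bar>" by linarith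
  also have "\<dots> \<le> gam p e * gam q e + gam p e + gam q e"
    using gam_nonneg[OF assms(1)] by (intro add_mono mult_mono assms) auto
  also have "\<dots> = gam (p+q) e" unfolding gam_def by (simp add: power_add algebra_simps)
  finally show ?thesis .
qed

lemma gam_one: assumes "\<bar>d\<bar> \<le> e" shows "\<bar>(1+d) - 1\<bar> \<le> gam 1 e"
  using assms unfolding gam_def by simp

lemma gam_mono': "0 \<le> e \<Longrightarrow> \<bar>a - 1\<bar> \<le> gam p e \<Longrightarrow> p \<le> q \<Longrightarrow> \<bar>a - 1\<bar> \<le> gam q e"
  using gam_mono order_trans by blast

lemma gam_prod:
  assumes "finite S" "0 \<le> e" "\<forall>k\<in>S. \<bar>d k\<bar> \<le> e"
  shows "\<bar>(\<Prod>k\<in>S. (1 + d k)) - 1\<bar> \<le> gam (card S) e"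
  using assms
proof (induction S rule: finite_induct)
  case empty then show ?case by (simp add: gam_def)
next
  case (insert a S)
  have "\<bar>(1 + d a) * (\<Prod>k\<in>S. (1 + d k)) - 1\<bar> \<le> gam (1 + card S) e"
    using insert by (intro gam_mult gam_one) auto
  then show ?case using insert by simp
qed

lemma gam_bound:
  assumes "0 \<le> e" "e \<le> 1"
  shows "gam N e \<le> real N * e + 3^N * e^2"
proof (induction N)
  case 0 then show ?case by (simp add: gam_def)
next
  case (Suc N)
  have IH: "(1+e)^N \<le> 1 + real N * e + 3^N * e^2" using Suc by (simp add: gam_def)
  have "(1+e)^Suc N = (1+e)^N * (1+e)" by simp
  also have "\<dots> \<le> (1 + real N * e + 3^N * e^2) * (1+e)"
    using IH assms by (intro mult_right_mono) auto
  also have "\<dots> = 1 + real (Suc N) * e + (real N * e^2 + 3^N * e^2 + 3^N*e^2*e)"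
    by (simp add: algebra_simps power2_eq_square)
  also have "\<dots> \<le> 1 + real (Suc N) * e + 3^Suc N * e^2"
  proof -
    have "real N \<le> 3^N"
    proof -
      have "real N < 2^N" using less_exp[of N]
        by (metis of_nat_less_iff of_nat_numeral of_nat_power)
      also have "(2::real)^N \<le> 3^N" by (intro power_mono) auto
      finally show ?thesis by simp
    qed
    have e2: "0 \<le> e^2" by simp
    have "3^N*e^2*e \<le> 3^N*e^2" using assms by (intro mult_left_le) auto
    moreover have "real N * e^2 \<le> 3^N * e^2" using \<open>real N \<le> 3^N\<close> e2 by (rule mult_right_mono)
    ultimately have "real N * e^2 + 3^N*e^2 + 3^N*e^2*e \<le> 3 * 3^N * e^2" by linarith
    then show ?thesis by simp
  qed
  finally show ?case by (simp add: gam_def)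
qed

lemma lsum_expand:
  "lsum t d m = (\<Sum>j<m. t j * (\<Prod>k\<in>{max j 1..<m}. (1 + d k)))"
proof (induction m)
  case 0 then show ?case by simp
next
  case (Suc m)
  show ?case
  proof (cases "m = 0")
    case True then show ?thesis by simp
  next
    case False
    have "lsum t d (Suc m) = (lsum t d m + t m) * (1 + d m)" using False by simp
    also have "\<dots> = (\<Sum>j<m. t j * (\<Prod>k\<in>{max j 1..<m}. (1 + d k)) * (1 + d m)) + t m * (1 + d m)"
      by (simp only: Suc.IH distrib_right sum_distrib_right)
    also have "(\<Sum>j<m. t j * (\<Prod>k\<in>{max j 1..<m}. (1 + d k)) * (1 + d m))
       = (\<Sum>j<m. t j * (\<Prod>k\<in>{max j 1..<Suc m}. (1 + d k)))"
      using False by (intro sum.cong) (auto simp: mult.assoc)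
    also have "t m * (1 + d m) = t m * (\<Prod>k\<in>{max m 1..<Suc m}. (1 + d k))"
      using False by (simp add: max_def)
    finally show ?thesis by simp
  qed
qed

lemma fl_dot_pert:
  assumes "fl_dot e m a y r" "0 \<le> e"
  shows "\<exists>\<theta>. (\<forall>j<m. \<bar>\<theta> j - 1\<bar> \<le> gam (m+1) e) \<and> r = (\<Sum>j<m. a j * y j * \<theta> j)"
proof -
  obtain da dm ds where d: "\<forall>j. \<bar>da j\<bar> \<le> e" "\<forall>j. \<bar>dm j\<bar> \<le> e" "\<forall>j. \<bar>ds j\<bar> \<le> e"
    and r: "r = lsum (\<lambda>j. (a j * (1 + da j)) * y j * (1 + dm j)) ds m"
    using assms(1) unfolding fl_dot_def by blast
  define \<theta> where "\<theta> j = ((1 + da j) * (1 + dm j)) * (\<Prod>k\<in>{max j 1..<m}. (1 + ds k))" for j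
  have "r = (\<Sum>j<m. a j * y j * \<theta> j)"
    unfolding r lsum_expand \<theta>_def by (intro sum.cong) (auto simp: algebra_simps)
  moreover have "\<bar>\<theta> j - 1\<bar> \<le> gam (m+1) e" if "j < m" for j
  proof -
    have "\<bar>\<theta> j - 1\<bar> \<le> gam ((1+1) + card {max j 1..<m}) e"
      unfolding \<theta>_def using d assms(2)
      by (intro gam_mult gam_one gam_prod) auto
    moreover have "(1+1) + card {max j 1..<m} \<le> m + 1" using that by auto
    ultimately show ?thesis using gam_mono' assms(2) by blast
  qed
  ultimately show ?thesis by blast
qed



lemma abs_sum_le: fixes f g :: "'a \<Rightarrow> real" assumes "\<And>j. j \<in> J \<Longrightarrow> \<bar>f j\<bar> \<le> g j" shows "\<bar>\<Sum>j\<in>J. f j\<bar> \<le> (\<Sum>j\<in>J. g j)"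
proof -
  have "\<bar>\<Sum>j\<in>J. f j\<bar> \<le> (\<Sum>j\<in>J. \<bar>f j\<bar>)" using sum_abs[of f J] by simp
  also have "\<dots> \<le> (\<Sum>j\<in>J. g j)" by (rule sum_mono) (rule assms)
  finally show ?thesis .
qed

lemma choice_lt: assumes "\<forall>j<n. \<exists>y. P j y" shows "\<exists>f. \<forall>j<n. P j (f j)"
proof -
  from assms have "\<forall>j. \<exists>y. j < n \<longrightarrow> P j y" by blast
  then have "\<exists>f. \<forall>j. j < n \<longrightarrow> P j (f j)" by (rule choice)
  then show ?thesis by blast
qed

lemma tc_err:
  fixes a h x u v w :: "nat \<Rightarrow> real" and G B :: "nat \<Rightarrow> nat \<Rightarrow> real"
  assumes e: "0 \<le> e"
    and hu: "\<forall>j<n. fl_dot e nh (G j) h (u j)"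
    and hv: "\<forall>j<n. fl_dot e n (B j) x (v j)"
    and hw: "\<forall>j<n. \<exists>\<delta>. \<bar>\<delta>\<bar> \<le> e \<and> w j = u j * v j * (1+\<delta>)"
    and hr: "fl_dot e n a w r"
  shows "\<bar>r - (\<Sum>j<n. a j * ((\<Sum>k<nh. G j k * h k) * (\<Sum>l<n. B j l * x l)))\<bar>
     \<le> (\<Sum>j<n. \<bar>a j\<bar> * ((\<Sum>k<nh. \<bar>G j k\<bar> * \<bar>h k\<bar>) * (\<Sum>l<n. \<bar>B j l\<bar> * \<bar>x l\<bar>))) * gam (nh + 2*n + 4) e"
proof -
  have a0: "\<forall>j<n. \<exists>\<theta>. (\<forall>k<nh. \<bar>\<theta> k - 1\<bar> \<le> gam (nh+1) e) \<and> u j = (\<Sum>k<nh. G j k * h k * \<theta> k)"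
  proof (intro allI impI)
    fix j assume "j < n"
    show "\<exists>\<theta>. (\<forall>k<nh. \<bar>\<theta> k - 1\<bar> \<le> gam (nh+1) e) \<and> u j = (\<Sum>k<nh. G j k * h k * \<theta> k)"
      by (rule fl_dot_pert[OF hu[rule_format, OF \<open>j < n\<close>] e])
  qed
  from choice_lt[OF a0] obtain \<alpha> where \<alpha>: "\<forall>j<n. (\<forall>k<nh. \<bar>\<alpha> j k - 1\<bar> \<le> gam (nh+1) e) \<and> u j = (\<Sum>k<nh. G j k * h k * \<alpha> j k)"
    ..
  have b0: "\<forall>j<n. \<exists>\<theta>. (\<forall>k<n. \<bar>\<theta> k - 1\<bar> \<le> gam (n+1) e) \<and> v j = (\<Sum>k<n. B j k * x k * \<theta> k)"
  proof (intro allI impI)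
    fix j assume "j < n"
    show "\<exists>\<theta>. (\<forall>k<n. \<bar>\<theta> k - 1\<bar> \<le> gam (n+1) e) \<and> v j = (\<Sum>k<n. B j k * x k * \<theta> k)"
      by (rule fl_dot_pert[OF hv[rule_format, OF \<open>j < n\<close>] e])
  qed
  from choice_lt[OF b0] obtain \<beta> where \<beta>: "\<forall>j<n. (\<forall>k<n. \<bar>\<beta> j k - 1\<bar> \<le> gam (n+1) e) \<and> v j = (\<Sum>k<n. B j k * x k * \<beta> j k)"
    ..
  from choice_lt[OF hw] obtain \<delta> where \<delta>: "\<forall>j<n. \<bar>\<delta> j\<bar> \<le> e \<and> w j = u j * v j * (1 + \<delta> j)"
    ..
  obtain \<gamma> where \<gamma>: "\<forall>j<n. \<bar>\<gamma> j - 1\<bar> \<le> gam (n+1) e" and r: "r = (\<Sum>j<n. a j * w j * \<gamma> j)"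
    using fl_dot_pert[OF hr e] by blast
  define P where "P j k l = a j * G j k * h k * B j l * x l" for j k l
  define \<Psi> where "\<Psi> j k l = \<gamma> j * (1 + \<delta> j) * \<alpha> j k * \<beta> j l" for j k l
  define N where "N = nh + 2*n + 4"
  have \<Psi>b: "\<bar>\<Psi> j k l - 1\<bar> \<le> gam N e" if "j < n" "k < nh" "l < n" for j k l
  proof -
    have "\<bar>\<Psi> j k l - 1\<bar> \<le> gam ((n+1) + 1 + (nh+1) + (n+1)) e"
      unfolding \<Psi>_def using that \<alpha> \<beta> \<gamma> \<delta> e by (intro gam_mult gam_one) auto
    moreover have "(n+1) + 1 + (nh+1) + (n+1) = N" unfolding N_def by simp
    ultimately show ?thesis by simp
  qed
  have rr: "r = (\<Sum>j<n. \<Sum>k<nh. \<Sum>l<n. P j k l * \<Psi> j k l)"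
    unfolding r
  proof (intro sum.cong refl)
    fix j assume j: "j \<in> {..<n}"
    have "a j * w j * \<gamma> j = a j * ((\<Sum>k<nh. G j k * h k * \<alpha> j k) * (\<Sum>l<n. B j l * x l * \<beta> j l) * (1 + \<delta> j)) * \<gamma> j"
      using j \<alpha> \<beta> \<delta> by simp
    also have "\<dots> = (\<Sum>k<nh. \<Sum>l<n. P j k l * \<Psi> j k l)"
      unfolding sum_product P_def \<Psi>_def by (simp add: sum_distrib_left sum_distrib_right mult_ac)
    finally show "a j * w j * \<gamma> j = (\<Sum>k<nh. \<Sum>l<n. P j k l * \<Psi> j k l)" .
  qed
  have ss: "(\<Sum>j<n. a j * ((\<Sum>k<nh. G j k * h k) * (\<Sum>l<n. B j l * x l))) = (\<Sum>j<n. \<Sum>k<nh. \<Sum>l<n. P j k l)"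
    unfolding sum_product P_def by (simp add: sum_distrib_left mult_ac)
  have tt: "(\<Sum>j<n. \<bar>a j\<bar> * ((\<Sum>k<nh. \<bar>G j k\<bar> * \<bar>h k\<bar>) * (\<Sum>l<n. \<bar>B j l\<bar> * \<bar>x l\<bar>))) = (\<Sum>j<n. \<Sum>k<nh. \<Sum>l<n. \<bar>P j k l\<bar>)"
    unfolding sum_product P_def by (simp add: sum_distrib_left abs_mult mult_ac)
  have "r - (\<Sum>j<n. \<Sum>k<nh. \<Sum>l<n. P j k l) = (\<Sum>j<n. \<Sum>k<nh. \<Sum>l<n. P j k l * (\<Psi> j k l - 1))"
    unfolding rr by (simp only: right_diff_distrib mult_1_right sum_subtractf)
  also have "\<bar>\<dots>\<bar> \<le> (\<Sum>j<n. \<Sum>k<nh. \<Sum>l<n. \<bar>P j k l\<bar> * gam N e)"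
    proof (intro abs_sum_le)
    fix j k l assume "j \<in> {..<n}" "k \<in> {..<nh}" "l \<in> {..<n}"
    then have "\<bar>\<Psi> j k l - 1\<bar> \<le> gam N e" by (intro \<Psi>b) auto
    then show "\<bar>P j k l * (\<Psi> j k l - 1)\<bar> \<le> \<bar>P j k l\<bar> * gam N e"
      unfolding abs_mult by (rule mult_left_mono) simp
  qed
  also have "\<dots> = (\<Sum>j<n. \<Sum>k<nh. \<Sum>l<n. \<bar>P j k l\<bar>) * gam N e"
    by (simp add: sum_distrib_right)
  finally show ?thesis unfolding ss tt N_def .
qed



lemma L2_row:
  fixes G :: "nat \<Rightarrow> nat \<Rightarrow> real" and h :: "nat \<Rightarrow> real"
  shows "L2_set (\<lambda>j. \<Sum>k<m. \<bar>G j k\<bar> * \<bar>h k\<bar>) {..<r} \<le> frob r m G * vnorm2 m h"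
proof -
  have "(\<Sum>k<m. \<bar>G j k\<bar> * \<bar>h k\<bar>)^2 \<le> (\<Sum>k<m. (G j k)^2) * (\<Sum>k<m. (h k)^2)" for j
  proof -
    have "(\<Sum>k<m. \<bar>G j k\<bar> * \<bar>h k\<bar>) \<le> L2_set (G j) {..<m} * L2_set h {..<m}"
      by (rule L2_set_mult_ineq)
    hence "(\<Sum>k<m. \<bar>G j k\<bar> * \<bar>h k\<bar>)^2 \<le> (L2_set (G j) {..<m} * L2_set h {..<m})^2"
      by (intro power_mono) (auto intro: sum_nonneg)
    also have "\<dots> = (\<Sum>k<m. (G j k)^2) * (\<Sum>k<m. (h k)^2)"
      unfolding L2_set_def power_mult_distrib by (simp add: sum_nonneg)
    finally show ?thesis .
  qed
  hence "(\<Sum>j<r. (\<Sum>k<m. \<bar>G j k\<bar> * \<bar>h k\<bar>)^2) \<le> (\<Sum>j<r. (\<Sum>k<m. (G j k)^2) * (\<Sum>k<m. (h k)^2))"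
    by (intro sum_mono)
  also have "\<dots> = (\<Sum>j<r. \<Sum>k<m. (G j k)^2) * (\<Sum>k<m. (h k)^2)"
    by (simp add: sum_distrib_right)
  finally have "sqrt (\<Sum>j<r. (\<Sum>k<m. \<bar>G j k\<bar> * \<bar>h k\<bar>)^2) \<le> sqrt ((\<Sum>j<r. \<Sum>k<m. (G j k)^2) * (\<Sum>k<m. (h k)^2))"
    by (rule real_sqrt_le_mono)
  thus ?thesis unfolding L2_set_def frob_def vnorm2_def by (simp add: real_sqrt_mult)
qed

lemma norm_bound:
  fixes A G B :: "nat \<Rightarrow> nat \<Rightarrow> real" and h x :: "nat \<Rightarrow> real"
  assumes n: "1 \<le> n"
  shows "(\<Sum>i<no. \<Sum>j<n. \<bar>A i j\<bar> * ((\<Sum>k<nh. \<bar>G j k\<bar> * \<bar>h k\<bar>) * (\<Sum>l<n. \<bar>B j l\<bar> * \<bar>x l\<bar>)))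
     \<le> mat_norm1 no n A * frob n nh G * vnorm2 nh h * frob n n B * vnorm2 n x"
proof -
  define U where "U j = (\<Sum>k<nh. \<bar>G j k\<bar> * \<bar>h k\<bar>)" for j
  define V where "V j = (\<Sum>l<n. \<bar>B j l\<bar> * \<bar>x l\<bar>)" for j
  define M where "M = mat_norm1 no n A"
  have U0: "0 \<le> U j" for j unfolding U_def by (intro sum_nonneg) auto
  have V0: "0 \<le> V j" for j unfolding V_def by (intro sum_nonneg) auto
  have colM: "(\<Sum>i<no. \<bar>A i j\<bar>) \<le> M" if "j < n" for j
    unfolding M_def mat_norm1_def using that by (intro Max_ge) auto
  have M0: "0 \<le> M"
    using colM[of 0] n by (meson order_trans sum_nonneg abs_ge_zero less_le_trans zero_less_one)
  have "(\<Sum>i<no. \<Sum>j<n. \<bar>A i j\<bar> * (U j * V j)) = (\<Sum>j<n. \<Sum>i<no. \<bar>A i j\<bar> * (U j * V j))"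
    by (rule sum.swap)
  also have "\<dots> = (\<Sum>j<n. (\<Sum>i<no. \<bar>A i j\<bar>) * (U j * V j))"
    by (simp add: sum_distrib_right)
  also have "\<dots> \<le> (\<Sum>j<n. M * (U j * V j))"
    by (intro sum_mono mult_right_mono colM) (auto intro: mult_nonneg_nonneg U0 V0)
  also have "\<dots> = M * (\<Sum>j<n. \<bar>U j\<bar> * \<bar>V j\<bar>)"
    using U0 V0 by (simp add: sum_distrib_left)
  also have "\<dots> \<le> M * (L2_set U {..<n} * L2_set V {..<n})"
    by (intro mult_left_mono M0 L2_set_mult_ineq)
  also have "\<dots> \<le> M * ((frob n nh G * vnorm2 nh h) * (frob n n B * vnorm2 n x))"
    unfolding U_def V_def
    by (intro mult_left_mono M0 mult_mono L2_row L2_set_nonneg) (auto simp: frob_def vnorm2_def intro!: mult_nonneg_nonneg sum_nonneg)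
  finally show ?thesis unfolding U_def V_def M_def by (simp add: mult_ac)
qed



theorem mainTheorem2:
  fixes n_o n_h :: nat and p h x :: "nat \<Rightarrow> real"
  defines "n \<equiv> n_o + n_h - 1"
  assumes "n_o \<ge> 1" and "n_h \<ge> 1"
    and "inj_on p {..<n}"
  shows "\<exists>C \<epsilon>0. \<epsilon>0 > 0 \<and>
    (\<forall>\<epsilon> shat. 0 \<le> \<epsilon> \<and> \<epsilon> \<le> \<epsilon>0 \<and> tc_computed \<epsilon> n_o n_h p h x shat \<longrightarrow>
       (\<forall>i<n_o. \<bar>shat i - tc_exact n_o n_h p h x i\<bar> \<le>
          (\<Sum>j<n. \<bar>tcAT p i j\<bar> *
             ((\<Sum>k<n_h. \<bar>tcG n p j k\<bar> * \<bar>h k\<bar>) * (\<Sum>k<n. \<bar>tcBT n p j k\<bar> * \<bar>x k\<bar>)))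
          * (real n_h + 2 * real n + 4) * \<epsilon> + C * \<epsilon>^2) \<and>
       (\<Sum>i<n_o. \<bar>shat i - tc_exact n_o n_h p h x i\<bar>) \<le>
          mat_norm1 n_o n (tcAT p) * frob n n_h (tcG n p) * vnorm2 n_h h
            * frob n n (tcBT n p) * vnorm2 n x * (real n_h + 2 * real n + 4) * \<epsilon> + C * \<epsilon>^2)"
  proof -
  define N where "N = n_h + 2*n + 4"
  define T where "T i = (\<Sum>j<n. \<bar>tcAT p i j\<bar> *
             ((\<Sum>k<n_h. \<bar>tcG n p j k\<bar> * \<bar>h k\<bar>) * (\<Sum>k<n. \<bar>tcBT n p j k\<bar> * \<bar>x k\<bar>)))" for i
  define C where "C = 3^N * (\<Sum>i<n_o. T i)"
  have n1: "1 \<le> n" unfolding n_def using assms(2,3) by simp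
  have T0: "0 \<le> T i" for i unfolding T_def by (intro sum_nonneg mult_nonneg_nonneg) auto
  have TC: "3^N * T i \<le> C" if "i < n_o" for i
    unfolding C_def using that T0 by (intro mult_left_mono member_le_sum) auto
  have RN: "real N = real n_h + 2 * real n + 4" unfolding N_def by simp
  show ?thesis
    apply (rule exI[of _ C], rule exI[of _ 1], rule conjI, simp)
    apply (intro allI impI)
    subgoal premises H for \<epsilon> shat
    proof -
    from H have e0: "0 \<le> \<epsilon>" and e1: "\<epsilon> \<le> 1" by auto
    from H obtain u v w where
      hu: "\<forall>j<n. fl_dot \<epsilon> n_h (tcG n p j) h (u j)" and
      hv: "\<forall>j<n. fl_dot \<epsilon> n (tcBT n p j) x (v j)" and
      hw: "\<forall>j<n. \<exists>\<delta>. \<bar>\<delta>\<bar> \<le> \<epsilon> \<and> w j = u j * v j * (1 + \<delta>)" and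
      hr: "\<forall>i<n_o. fl_dot \<epsilon> n (tcAT p i) w (shat i)"
      unfolding tc_computed_def Let_def n_def[symmetric] by blast
    have err: "\<bar>shat i - tc_exact n_o n_h p h x i\<bar> \<le> T i * gam N \<epsilon>" if "i < n_o" for i
    proof -
      have "tc_exact n_o n_h p h x i = (\<Sum>j<n. tcAT p i j * ((\<Sum>k<n_h. tcG n p j k * h k) * (\<Sum>k<n. tcBT n p j k * x k)))"
        unfolding tc_exact_def Let_def n_def ..
      then show ?thesis unfolding T_def N_def
        using tc_err[OF e0 hu hv hw hr[rule_format, OF that]] by simp
    qed
    have gb: "gam N \<epsilon> \<le> real N * \<epsilon> + 3^N * \<epsilon>^2" by (rule gam_bound[OF e0 e1])
    have err2: "\<bar>shat i - tc_exact n_o n_h p h x i\<bar> \<le> T i * real N * \<epsilon> + C * \<epsilon>^2" if "i < n_o" for i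
    proof -
      have "\<bar>shat i - tc_exact n_o n_h p h x i\<bar> \<le> T i * (real N * \<epsilon> + 3^N * \<epsilon>^2)"
        using err[OF that] mult_left_mono[OF gb T0[of i]] by linarith
      also have "\<dots> = T i * real N * \<epsilon> + (3^N * T i) * \<epsilon>^2" by (simp add: algebra_simps)
      also have "\<dots> \<le> T i * real N * \<epsilon> + C * \<epsilon>^2"
        using TC[OF that] by (intro add_left_mono mult_right_mono) auto
      finally show ?thesis .
    qed
    have P1: "\<forall>i<n_o. \<bar>shat i - tc_exact n_o n_h p h x i\<bar> \<le>
          (\<Sum>j<n. \<bar>tcAT p i j\<bar> *
             ((\<Sum>k<n_h. \<bar>tcG n p j k\<bar> * \<bar>h k\<bar>) * (\<Sum>k<n. \<bar>tcBT n p j k\<bar> * \<bar>x k\<bar>)))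
          * (real n_h + 2 * real n + 4) * \<epsilon> + C * \<epsilon>^2"
      using err2 unfolding T_def RN by blast
    have "(\<Sum>i<n_o. \<bar>shat i - tc_exact n_o n_h p h x i\<bar>) \<le> (\<Sum>i<n_o. T i * gam N \<epsilon>)"
      by (intro sum_mono err) auto
    also have "\<dots> = (\<Sum>i<n_o. T i) * gam N \<epsilon>" by (simp add: sum_distrib_right)
    also have "\<dots> \<le> (\<Sum>i<n_o. T i) * (real N * \<epsilon> + 3^N * \<epsilon>^2)"
      by (intro mult_left_mono gb sum_nonneg T0)
    also have "\<dots> = (\<Sum>i<n_o. T i) * real N * \<epsilon> + C * \<epsilon>^2"
      unfolding C_def by (simp add: algebra_simps)
    also have "\<dots> \<le> mat_norm1 n_o n (tcAT p) * frob n n_h (tcG n p) * vnorm2 n_h h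
            * frob n n (tcBT n p) * vnorm2 n x * real N * \<epsilon> + C * \<epsilon>^2"
      unfolding T_def using e0
      by (intro add_right_mono mult_right_mono norm_bound[OF n1]) auto
    finally have P2: "(\<Sum>i<n_o. \<bar>shat i - tc_exact n_o n_h p h x i\<bar>) \<le>
          mat_norm1 n_o n (tcAT p) * frob n n_h (tcG n p) * vnorm2 n_h h
            * frob n n (tcBT n p) * vnorm2 n x * (real n_h + 2 * real n + 4) * \<epsilon> + C * \<epsilon>^2"
      unfolding RN .
    show ?thesis using P1 P2 by blast
  qed
  done
qed


end
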